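(* Let $X$ be a continuum, $K\subset X$ a subcontinuum and $x\in K$. If the quotient $X/K$ is coastal at the point $K$, then $X$ is coastal at $x$.
   Context: A continuum is a nondegenerate compact connected Hausdorff space. $X/K$ is the quotient of $X$ obtained by collapsing $K$ to a single point, also denoted $K$. For a continuum $Z$ and points $z,p$, $\kappa(z;p)$ is the union of all subcontinua $M\neq Z$ of $Z$ with $z\in M$, $p\notin M$. $Z$ is coastal at $z$ if $\kappa(z;p)$ is dense in $Z$ for some $p\neq z$. *)

theory Defs
  imports "HOL-Analysis.Analysis"
begin

definition continuum :: "'a topology \<Rightarrow> bool" where
  "continuum X \<longleftrightarrow> compact_space X \<and> connected_space X \<and> Hausdorff_space X \<and>
     (\<exists>a b. a \<in> topspace X \<and> b \<in> topspace X \<and> a \<noteq> b)"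

definition subcontinuum :: "'a topology \<Rightarrow> 'a set \<Rightarrow> bool" where
  "subcontinuum X M \<longleftrightarrow> M \<subseteq> topspace X \<and> continuum (subtopology X M)"

definition kappa :: "'a topology \<Rightarrow> 'a \<Rightarrow> 'a \<Rightarrow> 'a set" where
  "kappa X z p = \<Union>{M. subcontinuum X M \<and> M \<noteq> topspace X \<and> z \<in> M \<and> p \<notin> M}"

definition coastal_at :: "'a topology \<Rightarrow> 'a \<Rightarrow> bool" where
  "coastal_at X z \<longleftrightarrow>
     (\<exists>p \<in> topspace X. p \<noteq> z \<and> X closure_of (kappa X z p) = topspace X)"

text \<open>Quotient X/K: points of K are collapsed to the single point K; every other
  point y becomes {y}.\<close>
definition collapse :: "'a set \<Rightarrow> 'a \<Rightarrow> 'a set" where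
  "collapse K y = (if y \<in> K then K else {y})"

lemma istopology_collapse:
  "istopology (\<lambda>U. U \<subseteq> collapse K ` topspace X \<and>
                   openin X {y \<in> topspace X. collapse K y \<in> U})"
proof -
  have 1: "{y \<in> topspace X. collapse K y \<in> S \<inter> T} =
      {y \<in> topspace X. collapse K y \<in> S} \<inter> {y \<in> topspace X. collapse K y \<in> T}" for S T
    by auto
  have 2: "{y \<in> topspace X. collapse K y \<in> \<Union>F} =
      \<Union>((\<lambda>U. {y \<in> topspace X. collapse K y \<in> U}) ` F)" for F
    by auto
  show ?thesis
    unfolding istopology_def
    by (auto simp only: 1 2 intro!: openin_Int openin_Union)
qed

definition quotient_by :: "'a topology \<Rightarrow> 'a set \<Rightarrow> 'a set topology" where
  "quotient_by X K = topology (\<lambda>U. U \<subseteq> collapse K ` topspace X \<and>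
                   openin X {y \<in> topspace X. collapse K y \<in> U})"

end

theory Submission
  imports Defs
begin

lemma col_eq1: "a \<notin> K \<Longrightarrow> collapse K b = collapse K a \<longleftrightarrow> b = a"
  by (auto simp: collapse_def)

lemma col_eqK: "collapse K b = K \<longleftrightarrow> b \<in> K"
  by (auto simp: collapse_def)

lemma openin_quot:
  "openin (quotient_by X K) U \<longleftrightarrow> U \<subseteq> collapse K ` topspace X \<and>
      openin X {y \<in> topspace X. collapse K y \<in> U}"
  unfolding quotient_by_def using istopology_collapse[of K X] by simp

lemma topspace_quot: "topspace (quotient_by X K) = collapse K ` topspace X"
proof
  show "topspace (quotient_by X K) \<subseteq> collapse K ` topspace X"
    using openin_quot[of X K "topspace (quotient_by X K)"] by simp
  have "openin (quotient_by X K) (collapse K ` topspace X)"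
  proof -
    have "{y \<in> topspace X. collapse K y \<in> collapse K ` topspace X} = topspace X" by blast
    then show ?thesis unfolding openin_quot by simp
  qed
  then show "collapse K ` topspace X \<subseteq> topspace (quotient_by X K)"
    by (simp add: openin_subset)
qed

lemma cont_quot: "continuous_map X (quotient_by X K) (collapse K)"
  unfolding continuous_map_def topspace_quot openin_quot by auto

lemma preimage_image:
  assumes "C \<subseteq> topspace X"
  shows "{w \<in> topspace X. collapse K w \<in> collapse K ` C} =
     C \<union> (if C \<inter> K = {} then {} else K \<inter> topspace X)"
  using assms by (auto simp: collapse_def split: if_splits)

lemma closed_quot:
  assumes "closedin X K"
  shows "closed_map X (quotient_by X K) (collapse K)"
  unfolding closed_map_def
proof (intro allI impI)
  fix C assume C: "closedin X C"
  have Csub: "C \<subseteq> topspace X" using C closedin_subset by blast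
  have "{y \<in> topspace X. collapse K y \<in> collapse K ` topspace X - collapse K ` C}
     = topspace X - {w \<in> topspace X. collapse K w \<in> collapse K ` C}" by blast
  also have "\<dots> = topspace X - (C \<union> (if C \<inter> K = {} then {} else K \<inter> topspace X))"
    using preimage_image[OF Csub] by simp
  finally have eq: "{y \<in> topspace X. collapse K y \<in> collapse K ` topspace X - collapse K ` C}
     = topspace X - (C \<union> (if C \<inter> K = {} then {} else K \<inter> topspace X))" .
  have "closedin X (C \<union> (if C \<inter> K = {} then {} else K \<inter> topspace X))"
    using C assms by (simp add: closedin_Un closedin_Int)
  then have "openin X (topspace X - (C \<union> (if C \<inter> K = {} then {} else K \<inter> topspace X)))"
    using openin_diff[OF openin_topspace] by blast
  then have "openin (quotient_by X K) (collapse K ` topspace X - collapse K ` C)"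
    unfolding openin_quot eq by blast
  moreover have "collapse K ` C \<subseteq> collapse K ` topspace X" using Csub by blast
  ultimately show "closedin (quotient_by X K) (collapse K ` C)"
    unfolding closedin_def topspace_quot by blast
qed

lemma fiber_quot:
  assumes "q \<in> topspace (quotient_by X K)" "K \<subseteq> topspace X"
  shows "{x \<in> topspace X. collapse K x = q} = K \<or>
         (\<exists>a \<in> topspace X. {x \<in> topspace X. collapse K x = q} = {a})"
proof -
  have "q \<in> collapse K ` topspace X" using assms(1) by (simp only: topspace_quot)
  then obtain a where a: "a \<in> topspace X" "q = collapse K a" by blast
  show ?thesis
  proof (cases "a \<in> K")
    case True
    then have "q = K" using a by (simp add: collapse_def)
    have "{x \<in> topspace X. collapse K x = q} = K"
      using col_eqK[of K] assms(2) \<open>q = K\<close> by blast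
    then show ?thesis by blast
  next
    case False
    have "{x \<in> topspace X. collapse K x = q} = {a}"
      using a col_eq1[OF False] by blast
    then show ?thesis using a by blast
  qed
qed

theorem mainTheorem15:
  fixes X :: "'a topology" and K :: "'a set" and x :: 'a
  assumes "continuum X"
    and "subcontinuum X K"
    and "x \<in> K"
    and "coastal_at (quotient_by X K) K"
  shows "coastal_at X x"
proof -
  define Q where "Q = quotient_by X K"
  define \<pi> where "\<pi> = collapse K"
  have Ksub: "K \<subseteq> topspace X" using assms(2) by (simp add: subcontinuum_def)
  have KX: "continuum (subtopology X K)" using assms(2) by (simp add: subcontinuum_def)
  have Kcomp: "compactin X K" using KX Ksub by (simp add: continuum_def compactin_subspace)
  have Kconn: "connectedin X K" using KX Ksub by (simp add: continuum_def connectedin_def)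
  have XH: "Hausdorff_space X" using assms(1) by (simp add: continuum_def)
  have Kclosed: "closedin X K" using compactin_imp_closedin[OF XH Kcomp] .
  have "\<exists>a b. a \<in> topspace (subtopology X K) \<and> b \<in> topspace (subtopology X K) \<and> a \<noteq> b"
    using KX unfolding continuum_def by (elim conjE)
  then obtain a b where ab: "a \<in> K" "b \<in> K" "a \<noteq> b"
    by (auto simp: topspace_subtopology)
  have topQ: "topspace Q = \<pi> ` topspace X" unfolding Q_def \<pi>_def by (rule topspace_quot)
  have proper: "proper_map X Q \<pi>"
    unfolding proper_map_def Q_def \<pi>_def
  proof (intro conjI ballI closed_quot[OF Kclosed])
    fix q assume "q \<in> topspace (quotient_by X K)"
    from fiber_quot[OF this Ksub]
    show "compactin X {x \<in> topspace X. collapse K x = q}"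
    proof
      assume "{x \<in> topspace X. collapse K x = q} = K" then show ?thesis using Kcomp by simp
    next
      assume "\<exists>a\<in>topspace X. {x \<in> topspace X. collapse K x = q} = {a}"
      then obtain a where "a \<in> topspace X" "{x \<in> topspace X. collapse K x = q} = {a}" by blast
      then show ?thesis by simp
    qed
  qed
  have mono: "monotone_map X Q \<pi>"
    unfolding monotone_map_def Q_def \<pi>_def
  proof (intro conjI ballI)
    show "collapse K ` topspace X \<subseteq> topspace (quotient_by X K)" by (simp add: topspace_quot)
    fix q assume "q \<in> topspace (quotient_by X K)"
    from fiber_quot[OF this Ksub]
    show "connectedin X {x \<in> topspace X. collapse K x = q}"
    proof
      assume "{x \<in> topspace X. collapse K x = q} = K" then show ?thesis using Kconn by simp
    next
      assume "\<exists>a\<in>topspace X. {x \<in> topspace X. collapse K x = q} = {a}"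
      then obtain a where "a \<in> topspace X" "{x \<in> topspace X. collapse K x = q} = {a}" by blast
      then show ?thesis by simp
    qed
  qed
  have iff: "monotone_map X Q \<pi> \<longleftrightarrow> (\<forall>C. connectedin Q C \<longrightarrow> connectedin X {x \<in> topspace X. \<pi> x \<in> C})"
  proof (rule monotone_closed_map)
    show "continuous_map X Q \<pi>" unfolding Q_def \<pi>_def by (rule cont_quot)
    show "closed_map X Q \<pi>" unfolding Q_def \<pi>_def by (rule closed_quot[OF Kclosed])
    show "\<pi> ` topspace X = topspace Q" using topQ by simp
  qed
  have conn_pre: "\<And>C. connectedin Q C \<Longrightarrow> connectedin X {x \<in> topspace X. \<pi> x \<in> C}"
    using iff mono by blast
  obtain p where p: "p \<in> topspace Q" "p \<noteq> K" "Q closure_of (kappa Q K p) = topspace Q"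
    using assms(4) unfolding coastal_at_def Q_def by blast
  have "p \<in> \<pi> ` topspace X" using p(1) topQ by simp
  then obtain y where y: "y \<in> topspace X" "p = \<pi> y" by blast
  have yK: "y \<notin> K" using y p(2) by (auto simp: \<pi>_def collapse_def split: if_splits)
  define S where "S = {z \<in> topspace X. \<pi> z \<in> kappa Q K p}"
  have S_sub: "S \<subseteq> kappa X x y"
  proof
    fix z assume "z \<in> S"
    then have z: "z \<in> topspace X" and "\<pi> z \<in> kappa Q K p" unfolding S_def by auto
    then obtain M where M: "subcontinuum Q M" "M \<noteq> topspace Q" "K \<in> M" "p \<notin> M" "\<pi> z \<in> M"
      unfolding kappa_def by blast
    define N where "N = {z \<in> topspace X. \<pi> z \<in> M}"
    have Msub: "M \<subseteq> topspace Q" using M(1) by (simp add: subcontinuum_def)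
    have MC: "continuum (subtopology Q M)" using M(1) by (simp add: subcontinuum_def)
    have Mc1: "compactin Q M" using MC Msub by (simp add: continuum_def compactin_subspace)
    have Mc2: "connectedin Q M" using MC Msub by (simp add: continuum_def connectedin_def)
    have Ncomp: "compactin X N"
      unfolding N_def using compactin_proper_map_preimage[OF proper Mc1] by simp
    have Nconn: "connectedin X N" unfolding N_def using conn_pre[OF Mc2] .
    have KN: "K \<subseteq> N" using Ksub M(3) by (auto simp: N_def \<pi>_def collapse_def)
    have Nsub: "N \<subseteq> topspace X" unfolding N_def by blast
    have "subcontinuum X N"
      unfolding subcontinuum_def continuum_def
    proof (intro conjI Nsub)
      show "compact_space (subtopology X N)" using Ncomp by (simp add: compact_space_subtopology)
      show "connected_space (subtopology X N)" using Nconn by (simp add: connectedin_def)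
      show "Hausdorff_space (subtopology X N)" using XH by (rule Hausdorff_space_subtopology)
      show "\<exists>a b. a \<in> topspace (subtopology X N) \<and> b \<in> topspace (subtopology X N) \<and> a \<noteq> b"
        using ab KN Nsub by (intro exI[of _ a] exI[of _ b]) (auto simp: topspace_subtopology)
    qed
    moreover have "N \<noteq> topspace X"
    proof
      assume NX: "N = topspace X"
      have "topspace Q \<subseteq> M"
      proof
        fix q assume "q \<in> topspace Q"
        then have "q \<in> \<pi> ` topspace X" using topQ by simp
        then obtain w where "w \<in> topspace X" "q = \<pi> w" by blast
        then show "q \<in> M" using NX unfolding N_def by blast
      qed
      then show False using Msub M(2) by blast
    qed
    moreover have "x \<in> N" using KN assms(3) by blast
    moreover have "y \<notin> N" using M(4) y by (simp add: N_def)
    moreover have "z \<in> N" using z M(5) by (simp add: N_def)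
    ultimately show "z \<in> kappa X x y" unfolding kappa_def by blast
  qed
  have "topspace X \<subseteq> X closure_of S"
  proof
    fix z assume z: "z \<in> topspace X"
    show "z \<in> X closure_of S"
    proof (cases "z \<in> K")
      case True
      have "kappa Q K p \<noteq> {}" using p(1,3) by auto
      then have "K \<in> kappa Q K p" unfolding kappa_def by blast
      then have "z \<in> S" using True z by (simp add: S_def \<pi>_def collapse_def)
      moreover have "S \<subseteq> topspace X" unfolding S_def by blast
      ultimately show ?thesis using closure_of_subset[of S X] by blast
    next
      case False
      show ?thesis unfolding in_closure_of
      proof (intro conjI allI impI z)
        fix T assume T: "z \<in> T \<and> openin X T"
        define T' where "T' = T - K"
        have T'o: "openin X T'" using T Kclosed by (simp add: T'_def openin_diff)
        have T'sub: "T' \<subseteq> topspace X" using T'o openin_subset by blast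
        have pre: "{w \<in> topspace X. \<pi> w \<in> \<pi> ` T'} = T'"
          using T'sub by (auto simp: \<pi>_def collapse_def T'_def split: if_splits)
        have "openin Q (\<pi> ` T')"
          unfolding Q_def openin_quot using pre T'o T'sub unfolding \<pi>_def by auto
        moreover have "\<pi> z \<in> \<pi> ` T'" using T False by (simp add: T'_def)
        moreover have "\<pi> z \<in> Q closure_of (kappa Q K p)"
          using p(3) z topQ by simp
        ultimately obtain u where "u \<in> kappa Q K p" "u \<in> \<pi> ` T'"
          unfolding in_closure_of by blast
        then obtain t where "t \<in> T'" "\<pi> t \<in> kappa Q K p" by blast
        then show "\<exists>y. y \<in> S \<and> y \<in> T" using T'sub by (auto simp: S_def T'_def)
      qed
    qed
  qed
  then have cl0: "topspace X \<subseteq> X closure_of (kappa X x y)"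
    using closure_of_mono[OF S_sub] by (rule subset_trans)
  have cl: "X closure_of (kappa X x y) = topspace X"
    using closure_of_subset_topspace cl0 by (rule subset_antisym)
  have yx: "y \<noteq> x" using yK assms(3) by blast
  show ?thesis unfolding coastal_at_def
  proof (rule bexI[of _ y])
    show "y \<noteq> x \<and> X closure_of kappa X x y = topspace X" using yx cl by (rule conjI)
  qed (rule y(1))
qed

end
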